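(* Let $S$ and $T$ be maps (each with finitely many points of period dividing $n$ for every $n\ge1$) such that the Cartesian product $S\times T$ satisfies $\mathcal O_{S\times T}(n)=1$ for all $n\ge1$. Then there is a set $P$ of primes such that $\mathcal O_T=s_P$ and $\mathcal O_S=s_{P^c}$, where $P^c$ is the set of primes not in $P$.
   Context: For a map $T:X\to X$, $\mathcal O_T(n)$ denotes the number of closed orbits of length $n$ under $T$ (sets $\{x,Tx,\dots,T^{n-1}x\}$ with $T^nx=x$ of cardinality exactly $n$). For a set $P$ of primes, $s_P$ is the sequence with $s_P(n)=0$ if $p\mid n$ for some $p\in P$, and $s_P(n)=1$ otherwise. *)

theory Defs
  imports "HOL-Computational_Algebra.Primes"
begin

definition orbit_seg :: "('a \<Rightarrow> 'a) \<Rightarrow> 'a \<Rightarrow> nat \<Rightarrow> 'a set" where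
  "orbit_seg T x n = {(T ^^ k) x | k. k < n}"

definition closed_orbits :: "('a \<Rightarrow> 'a) \<Rightarrow> nat \<Rightarrow> 'a set set" where
  "closed_orbits T n = {orbit_seg T x n | x. (T ^^ n) x = x \<and> card (orbit_seg T x n) = n}"

definition orbit_count :: "('a \<Rightarrow> 'a) \<Rightarrow> nat \<Rightarrow> nat" where
  "orbit_count T n = card (closed_orbits T n)"

definition finite_periodic :: "('a \<Rightarrow> 'a) \<Rightarrow> bool" where
  "finite_periodic T \<longleftrightarrow> (\<forall>n\<ge>1. finite {x. (T ^^ n) x = x})"

definition prod_map :: "('a \<Rightarrow> 'a) \<Rightarrow> ('b \<Rightarrow> 'b) \<Rightarrow> ('a \<times> 'b \<Rightarrow> 'a \<times> 'b)" where
  "prod_map S T = (\<lambda>(x, y). (S x, T y))"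

definition s_seq :: "nat set \<Rightarrow> nat \<Rightarrow> nat" where
  "s_seq P n = (if \<exists>p\<in>P. p dvd n then 0 else 1)"

end

theory Submission
  imports Defs
begin

definition per :: "('a \<Rightarrow> 'a) \<Rightarrow> 'a \<Rightarrow> nat \<Rightarrow> bool" where
  "per T x n \<longleftrightarrow> (T^^n) x = x \<and> card (orbit_seg T x n) = n"

lemma closed_orbits_iff: "C \<in> closed_orbits T n \<longleftrightarrow> (\<exists>x. per T x n \<and> C = orbit_seg T x n)"
  by (auto simp: closed_orbits_def per_def)

lemma orbit_seg_image: "orbit_seg T x n = (\<lambda>k. (T^^k) x) ` {..<n}"
  by (auto simp: orbit_seg_def)

lemma pow_shift: "((T::'a\<Rightarrow>'a)^^i) y = (T^^j) y \<Longrightarrow> (T^^(m+i)) y = (T^^(m+j)) y"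
  unfolding funpow_add comp_def by simp

lemma per_iff:
  assumes "n \<ge> 1"
  shows "per T x n \<longleftrightarrow> (T^^n) x = x \<and> (\<forall>k. 0<k \<and> k<n \<longrightarrow> (T^^k) x \<noteq> x)"
proof
  assume p: "per T x n"
  then have c: "card ((\<lambda>k. (T^^k) x) ` {..<n}) = card {..<n}"
    by (simp add: per_def orbit_seg_image)
  have inj: "inj_on (\<lambda>k. (T^^k) x) {..<n}"
    by (rule eq_card_imp_inj_on[OF _ c]) simp
  show "(T^^n) x = x \<and> (\<forall>k. 0<k \<and> k<n \<longrightarrow> (T^^k) x \<noteq> x)"
  proof (intro conjI allI impI)
    show "(T^^n) x = x" using p by (simp add: per_def)
  next
    fix k assume k: "0<k \<and> k<n"
    show "(T^^k) x \<noteq> x"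
    proof
      assume "(T^^k) x = x"
      then have "(T^^k) x = (T^^0) x" by simp
      then have "k = 0" using inj_onD[OF inj, of k 0] k assms by simp
      with k show False by simp
    qed
  qed
next
  assume a: "(T^^n) x = x \<and> (\<forall>k. 0<k \<and> k<n \<longrightarrow> (T^^k) x \<noteq> x)"
  have inj: "inj_on (\<lambda>k. (T^^k) x) {..<n}"
  proof (rule inj_onI)
    have key: "i = j" if "i < j" "j < n" "(T^^i) x = (T^^j) x" for i j
    proof -
      have "(T^^(n-j+i)) x = (T^^(n-j+j)) x" using pow_shift[OF that(3)] .
      also have "\<dots> = x" using that a by simp
      finally have "(T^^(n-j+i)) x = x" .
      moreover have "0 < n-j+i" "n-j+i < n" using that by auto
      ultimately show ?thesis using a by blast
    qed
    fix i j assume "i \<in> {..<n}" "j \<in> {..<n}" "(T^^i) x = (T^^j) x"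
    then show "i = j" using key[of i j] key[of j i]
      by (metis lessThan_iff linorder_neqE_nat)
  qed
  show "per T x n" using a inj
    by (simp add: per_def orbit_seg_image card_image)
qed

lemma pow_mult_fix: "((T::'a\<Rightarrow>'a)^^n) x = x \<Longrightarrow> (T^^(n*q)) x = x"
proof (induction q)
  case 0 then show ?case by simp
next
  case (Suc q)
  have "(T^^(n*Suc q)) x = (T^^n) ((T^^(n*q)) x)" by (simp add: funpow_add)
  then show ?case using Suc by simp
qed

lemma pow_mod: "((T::'a\<Rightarrow>'a)^^n) x = x \<Longrightarrow> (T^^m) x = (T^^(m mod n)) x"
proof -
  assume h: "(T^^n) x = x"
  have "(T^^m) x = (T^^(m mod n + n*(m div n))) x" by simp
  also have "\<dots> = (T^^(m mod n)) ((T^^(n*(m div n))) x)" unfolding funpow_add comp_def by simp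
  also have "\<dots> = (T^^(m mod n)) x" using pow_mult_fix[OF h] by simp
  finally show ?thesis .
qed

lemma per_dvd: "per T x n \<Longrightarrow> n \<ge> 1 \<Longrightarrow> (T^^m) x = x \<Longrightarrow> n dvd m"
proof (rule ccontr)
  assume p: "per T x n" and n1: "n \<ge> 1" and m: "(T^^m) x = x" and nd: "\<not> n dvd m"
  have a: "(T^^n) x = x \<and> (\<forall>k. 0<k \<and> k<n \<longrightarrow> (T^^k) x \<noteq> x)" using p unfolding per_iff[OF n1] .
  have "(T^^(m mod n)) x = x" using pow_mod[where T=T and n=n and x=x and m=m] a m by simp
  moreover have "0 < m mod n" using nd by (simp add: dvd_eq_mod_eq_0)
  moreover have "m mod n < n" using n1 by simp
  ultimately show False using a by blast
qed

lemma per_exists: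
  assumes "(T^^n) x = x" "n \<ge> 1"
  shows "\<exists>a\<ge>1. per T x a"
proof -
  define a where "a = (LEAST k. 0<k \<and> (T^^k) x = x)"
  have ex: "0<n \<and> (T^^n) x = x" using assms by simp
  have a1: "0<a \<and> (T^^a) x = x" unfolding a_def by (rule LeastI[of "\<lambda>k. 0<k \<and> (T^^k) x = x", OF ex])
  have a2: "\<forall>k. 0<k \<and> k<a \<longrightarrow> (T^^k) x \<noteq> x"
    unfolding a_def using not_less_Least by blast
  have a1': "a \<ge> 1" using a1 by simp
  have "per T x a" unfolding per_iff[OF a1'] using a1 a2 by blast
  then show ?thesis using a1 by (intro exI[of _ a]) auto
qed

lemma per_unique: "per T x n \<Longrightarrow> per T x m \<Longrightarrow> n\<ge>1 \<Longrightarrow> m\<ge>1 \<Longrightarrow> n = m"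
  by (meson dvd_antisym per_def per_dvd)

lemma prod_pow: "(prod_map S T ^^ k) (x,y) = ((S^^k) x, (T^^k) y)"
  by (induction k) (auto simp: prod_map_def)

lemma per_prod:
  assumes "per S x a" "per T y b" "a\<ge>1" "b\<ge>1"
  shows "per (prod_map S T) (x,y) (lcm a b)"
proof -
  have L: "lcm a b \<ge> 1" using assms by (simp add: Suc_le_eq lcm_pos_nat)
  have sa: "(S^^a) x = x" "(T^^b) y = y" using assms by (auto simp: per_def)
  have "(S^^(a * (lcm a b div a))) x = x" by (rule pow_mult_fix[OF sa(1)])
  then have "(S^^(lcm a b)) x = x" by (simp add: dvd_mult_div_cancel)
  moreover have "(T^^(b * (lcm a b div b))) y = y" by (rule pow_mult_fix[OF sa(2)])
  then have "(T^^(lcm a b)) y = y" by (simp add: dvd_mult_div_cancel)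
  moreover have "(prod_map S T ^^ k) (x,y) \<noteq> (x,y)" if "0<k" "k<lcm a b" for k
  proof
    assume "(prod_map S T ^^ k) (x,y) = (x,y)"
    then have "(S^^k) x = x" "(T^^k) y = y" by (auto simp: prod_pow)
    then have "a dvd k" "b dvd k" using per_dvd[OF assms(1) assms(3)] per_dvd[OF assms(2) assms(4)] by auto
    then have "lcm a b dvd k" by (rule lcm_least)
    then have "lcm a b \<le> k" using that(1) by (rule dvd_imp_le)
    then show False using that(2) by linarith
  qed
  ultimately show ?thesis unfolding per_iff[OF L] prod_pow by auto
qed

lemma per1: "per T x 1 \<longleftrightarrow> T x = x"
proof -
  have "orbit_seg T x 1 = {x}" by (auto simp: orbit_seg_def)
  then show ?thesis by (simp add: per_def)
qed

lemma per_shift: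
  assumes "per T y b" "b \<ge> 1"
  shows "per T (T y) b"
proof -
  have a: "(T^^b) y = y \<and> (\<forall>k. 0<k \<and> k<b \<longrightarrow> (T^^k) y \<noteq> y)" using assms(1) unfolding per_iff[OF assms(2)] .
  have "(T^^b) (T y) = T y" using a by (metis funpow_swap1)
  moreover have "(T^^k) (T y) \<noteq> T y" if "0<k" "k<b" for k
  proof
    assume h: "(T^^k) (T y) = T y"
    have "(T^^(k+1)) y = (T^^1) y" using h by (simp add: funpow_Suc_right del: funpow.simps)
    then have "(T^^(b-1+(k+1))) y = (T^^(b-1+1)) y" by (rule pow_shift)
    moreover have "(T^^(b-1+(k+1))) y = (T^^k) ((T^^b) y)"
      using assms(2) by (simp add: funpow_add[symmetric] algebra_simps del: funpow.simps)
        (metis add.commute comp_apply funpow_add)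
    ultimately have "(T^^k) y = y" using a assms(2) by simp
    then show False using a that by blast
  qed
  ultimately show ?thesis unfolding per_iff[OF assms(2)] by blast
qed

lemma orbit_fst: "fst ` orbit_seg (prod_map S T) (x,y) n = orbit_seg S x n"
  by (auto simp: orbit_seg_image prod_pow image_image)

lemma orbit_snd: "snd ` orbit_seg (prod_map S T) (x,y) n = orbit_seg T y n"
  by (auto simp: orbit_seg_image prod_pow image_image)

theorem proposition3p1:
  fixes S :: "'a \<Rightarrow> 'a" and T :: "'b \<Rightarrow> 'b"
  assumes "finite_periodic S" and "finite_periodic T"
    and "\<forall>n\<ge>1. orbit_count (prod_map S T) n = 1"
  shows "\<exists>P. P \<subseteq> {p. prime p} \<and>
           (\<forall>n\<ge>1. orbit_count T n = s_seq P n) \<and>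
           (\<forall>n\<ge>1. orbit_count S n = s_seq ({p. prime p} - P) n)"
proof -
  define Q where "Q = prod_map S T"
  have H1: "\<exists>C. closed_orbits Q n = {C}" if "n\<ge>1" for n
    using assms(3) that card_1_singleton_iff unfolding Q_def orbit_count_def by (metis One_nat_def)
  have allEq: "C1 = C2" if "n\<ge>1" "C1 \<in> closed_orbits Q n" "C2 \<in> closed_orbits Q n" for n C1 C2
    using H1[OF that(1)] that by auto
  have nonempty: "\<exists>x y. per Q (x,y) n" if "n\<ge>1" for n
    using H1[OF that] closed_orbits_iff by (metis insertI1 surj_pair)
  obtain x0 y0 where "per Q (x0,y0) 1" using nonempty by blast
  then have fx: "per S x0 1" "per T y0 1" unfolding per1 Q_def by (auto simp: prod_map_def)
  define A where "A = {a. a\<ge>1 \<and> (\<exists>x. per S x a)}"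
  define B where "B = {b. b\<ge>1 \<and> (\<exists>y. per T y b)}"
  have A1: "a \<ge> 1" if "a \<in> A" for a using that by (simp add: A_def)
  have B1: "b \<ge> 1" if "b \<in> B" for b using that by (simp add: B_def)
  have cop: "coprime a b" if abAB: "a \<in> A" "b \<in> B" for a b
  proof (rule ccontr)
    assume nc: "\<not> coprime a b"
    obtain x y where xy: "per S x a" "per T y b" "a\<ge>1" "b\<ge>1" using abAB unfolding A_def B_def by blast
    define L where "L = lcm a b"
    have L1: "L \<ge> 1" using xy by (simp add: L_def Suc_le_eq lcm_pos_nat)
    have p1: "per Q (x,y) L" using per_prod[OF xy] by (simp add: Q_def L_def)
    have p2: "per Q (x,T y) L" using per_prod[OF xy(1) per_shift[OF xy(2,4)] xy(3,4)]
      by (simp add: Q_def L_def)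
    have "orbit_seg Q (x,y) L = orbit_seg Q (x, T y) L"
      using allEq[OF L1] p1 p2 closed_orbits_iff by metis
    moreover have "(x, T y) \<in> orbit_seg Q (x, T y) L"
      using L1 unfolding orbit_seg_def by (auto intro!: exI[of _ 0])
    ultimately have "(x, T y) \<in> orbit_seg Q (x,y) L" by simp
    then obtain k where k: "(Q^^k) (x,y) = (x, T y)"
      unfolding orbit_seg_def by auto
    then have sk: "(S^^k) x = x" and tk: "(T^^k) y = (T^^1) y" by (auto simp: Q_def prod_pow)
    have "a dvd k" using per_dvd[OF xy(1) xy(3) sk] .
    have "(T^^(b-1+k)) y = (T^^(b-1+1)) y" using pow_shift[OF tk] .
    then have "(T^^(b-1+k)) y = y" using xy by (simp add: per_def)
    then have "b dvd (b-1+k)" using per_dvd[OF xy(2) xy(4)] by blast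
    define g where "g = gcd a b"
    have "g dvd k" using \<open>a dvd k\<close> g_def by (meson dvd_trans gcd_dvd1)
    moreover have "g dvd (b-1+k)" using \<open>b dvd (b-1+k)\<close> g_def by (meson dvd_trans gcd_dvd2)
    moreover have "g dvd b" by (simp add: g_def)
    moreover have "(b-1+k) + 1 = b + k" using xy by simp
    ultimately have "g dvd 1" by (metis dvd_add dvd_add_right_iff)
    then show False using nc g_def by (simp add: coprime_iff_gcd_eq_1)
  qed
  have decomp: "\<exists>a\<in>A. \<exists>b\<in>B. n = a*b" if nn: "n\<ge>1" for n
  proof -
    obtain x y where p: "per Q (x,y) n" using nonempty[OF nn] by blast
    then have "(S^^n) x = x" "(T^^n) y = y" by (auto simp: per_def Q_def prod_pow)
    then obtain a b where ab: "a\<ge>1" "per S x a" "b\<ge>1" "per T y b"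
      using per_exists nn by metis
    then have "a \<in> A" "b \<in> B" by (auto simp: A_def B_def)
    have "per Q (x,y) (lcm a b)" using per_prod[OF ab(2,4,1,3)] by (simp add: Q_def)
    moreover have "lcm a b \<ge> 1" using ab by (simp add: Suc_le_eq lcm_pos_nat)
    ultimately have "n = lcm a b" using per_unique[OF p _ nn] by blast
    also have "\<dots> = a*b" using cop[OF \<open>a\<in>A\<close> \<open>b\<in>B\<close>] by (simp add: lcm_coprime)
    finally show ?thesis using \<open>a \<in> A\<close> \<open>b \<in> B\<close> by blast
  qed
  have countS: "orbit_count S n = (if n \<in> A then 1 else 0)" if n1: "n\<ge>1" for n
  proof (cases "n \<in> A")
    case True
    then obtain x where x: "per S x n" by (auto simp: A_def)
    have "closed_orbits S n = {orbit_seg S x n}"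
    proof (intro equalityI subsetI)
      fix C assume "C \<in> closed_orbits S n"
      then obtain x' where x': "per S x' n" "C = orbit_seg S x' n" using closed_orbits_iff by metis
      have "per Q (x,y0) n" using per_prod[OF x fx(2) n1] by (simp add: Q_def)
      moreover have "per Q (x',y0) n" using per_prod[OF x'(1) fx(2) n1] by (simp add: Q_def)
      ultimately have "orbit_seg Q (x,y0) n = orbit_seg Q (x',y0) n"
        using allEq[OF n1] closed_orbits_iff by metis
      then have "fst ` orbit_seg Q (x,y0) n = fst ` orbit_seg Q (x',y0) n" by simp
      then show "C \<in> {orbit_seg S x n}" using x' by (simp add: Q_def orbit_fst)
    next
      fix C assume "C \<in> {orbit_seg S x n}"
      then show "C \<in> closed_orbits S n" using x closed_orbits_iff by blast
    qed
    then show ?thesis using True by (simp add: orbit_count_def)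
  next
    case False
    then have "closed_orbits S n = {}" using n1 unfolding A_def closed_orbits_def per_def by blast
    then show ?thesis using False by (simp add: orbit_count_def)
  qed
  have countT: "orbit_count T n = (if n \<in> B then 1 else 0)" if n1: "n\<ge>1" for n
  proof (cases "n \<in> B")
    case True
    then obtain y where y: "per T y n" by (auto simp: B_def)
    have "closed_orbits T n = {orbit_seg T y n}"
    proof (intro equalityI subsetI)
      fix C assume "C \<in> closed_orbits T n"
      then obtain y' where y': "per T y' n" "C = orbit_seg T y' n" using closed_orbits_iff by metis
      have "per Q (x0,y) n" using per_prod[OF fx(1) y _ n1] by (simp add: Q_def)
      moreover have "per Q (x0,y') n" using per_prod[OF fx(1) y'(1) _ n1] by (simp add: Q_def)
      ultimately have "orbit_seg Q (x0,y) n = orbit_seg Q (x0,y') n"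
        using allEq[OF n1] closed_orbits_iff by metis
      then have "snd ` orbit_seg Q (x0,y) n = snd ` orbit_seg Q (x0,y') n" by simp
      then show "C \<in> {orbit_seg T y n}" using y' by (simp add: Q_def orbit_snd)
    next
      fix C assume "C \<in> {orbit_seg T y n}"
      then show "C \<in> closed_orbits T n" using y closed_orbits_iff by blast
    qed
    then show ?thesis using True by (simp add: orbit_count_def)
  next
    case False
    then have "closed_orbits T n = {}" using n1 unfolding B_def closed_orbits_def per_def by blast
    then show ?thesis using False by (simp add: orbit_count_def)
  qed
  have cop_dvd: False if "coprime p n" "p dvd n" "prime (p::nat)" for p n
    using coprime_common_divisor[OF that(1) dvd_refl that(2)] that(3) not_prime_unit by blast
  have AorB: "p \<in> A \<or> p \<in> B" if "prime (p::nat)" for p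
  proof -
    have "p \<ge> 1" using that prime_gt_0_nat by (simp add: Suc_le_eq)
    then obtain a b where ab: "a\<in>A" "b\<in>B" "p = a*b" using decomp by blast
    then have "a dvd p" by simp
    then have "a = 1 \<or> a = p" using that prime_nat_iff by blast
    then show ?thesis using ab by auto
  qed
  define Pset where "Pset = {p. prime p \<and> p \<in> A}"
  have Bchar: "n \<in> B \<longleftrightarrow> \<not>(\<exists>p\<in>Pset. p dvd n)" if n1: "n\<ge>1" for n
  proof
    assume nB: "n \<in> B"
    show "\<not>(\<exists>p\<in>Pset. p dvd n)"
    proof
      assume "\<exists>p\<in>Pset. p dvd n"
      then obtain p where p: "prime p" "p \<in> A" "p dvd n" by (auto simp: Pset_def)
      have "coprime p n" using cop[OF p(2) nB] .
      then show False using cop_dvd p by blast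
    qed
  next
    assume h: "\<not>(\<exists>p\<in>Pset. p dvd n)"
    obtain a b where ab: "a\<in>A" "b\<in>B" "n = a*b" using decomp[OF n1] by blast
    have "a = 1"
    proof (rule ccontr)
      assume "a \<noteq> 1"
      then obtain p where p: "prime p" "p dvd a" using prime_factor_nat by blast
      then have "p dvd n" using ab by simp
      then have "p \<notin> A" using h p by (auto simp: Pset_def)
      then have "p \<in> B" using AorB p by blast
      then have "coprime a p" using cop[OF ab(1)] by blast
      then have "coprime p a" by (simp add: coprime_commute)
      then show False using cop_dvd p by blast
    qed
    then show "n \<in> B" using ab by simp
  qed
  have Achar: "n \<in> A \<longleftrightarrow> \<not>(\<exists>p\<in>{p. prime p} - Pset. p dvd n)" if n1: "n\<ge>1" for n
  proof
    assume nA: "n \<in> A"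
    show "\<not>(\<exists>p\<in>{p. prime p} - Pset. p dvd n)"
    proof
      assume "\<exists>p\<in>{p. prime p} - Pset. p dvd n"
      then obtain p where p: "prime p" "p \<notin> A" "p dvd n" by (auto simp: Pset_def)
      then have "p \<in> B" using AorB by blast
      then have "coprime n p" using cop[OF nA] by blast
      then have "coprime p n" by (simp add: coprime_commute)
      then show False using cop_dvd p by blast
    qed
  next
    assume h: "\<not>(\<exists>p\<in>{p. prime p} - Pset. p dvd n)"
    obtain a b where ab: "a\<in>A" "b\<in>B" "n = a*b" using decomp[OF n1] by blast
    have "b = 1"
    proof (rule ccontr)
      assume "b \<noteq> 1"
      then obtain p where p: "prime p" "p dvd b" using prime_factor_nat by blast
      then have "p dvd n" using ab by simp
      have "p \<notin> A"
      proof
        assume "p \<in> A"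
        then have "coprime p b" using cop ab(2) by blast
        then show False using cop_dvd p by blast
      qed
      then show False using h p \<open>p dvd n\<close> by (auto simp: Pset_def)
    qed
    then show "n \<in> A" using ab by simp
  qed
  show ?thesis
  proof (intro exI[of _ Pset] conjI allI impI)
    show "Pset \<subseteq> {p. prime p}" by (auto simp: Pset_def)
  next
    fix n :: nat assume n1: "n \<ge> 1"
    show "orbit_count T n = s_seq Pset n"
      using countT[OF n1] Bchar[OF n1] by (simp add: s_seq_def)
  next
    fix n :: nat assume n1: "n \<ge> 1"
    show "orbit_count S n = s_seq ({p. prime p} - Pset) n"
      using countS[OF n1] Achar[OF n1] by (simp add: s_seq_def)
  qed
qed

end
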